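(* Let $V$ be a nonzero finite-dimensional complex vector space with a norm $\lVert\cdot\rVert$, and let $G\le\mathrm U(V)$ be a finite group. Let $M=\{x\in G : \lVert \mathrm{id}_V-x\rVert_{\mathrm{op}}<1/2\}$ and let $A$ be the subgroup of $G$ generated by $M$. Then $A$ is an abelian normal subgroup of $G$.
   Context: $\mathrm U(V)$ denotes the group of linear isometries of $V$, i.e. the set of $x\in\mathrm{GL}(V)$ with $\lVert xv\rVert=\lVert v\rVert$ for all $v\in V$. For $a\in\mathrm{End}(V)$, the operator norm is $\lVert a\rVert_{\mathrm{op}}=\max\{\lVert av\rVert : v\in V,\ \lVert v\rVert=1\}$. *)

theory Defs
  imports "HOL-Analysis.Analysis" "HOL-Algebra.Generated_Groups"
begin

text \<open>V is modelled as complex^'n (any nonzero finite-dimensional complex vector space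
is isomorphic to one of these) equipped with an arbitrary norm N.\<close>

definition is_cnorm :: "(complex^'n \<Rightarrow> real) \<Rightarrow> bool" where
  "is_cnorm N \<longleftrightarrow>
     (\<forall>v. N v = 0 \<longleftrightarrow> v = 0) \<and>
     (\<forall>c v. N (c *s v) = cmod c * N v) \<and>
     (\<forall>v w. N (v + w) \<le> N v + N w)"

definition unitary_set :: "(complex^'n \<Rightarrow> real) \<Rightarrow> (complex^'n^'n) set" where
  "unitary_set N = {x. invertible x \<and> (\<forall>v. N (x *v v) = N v)}"

definition UGrp :: "(complex^'n \<Rightarrow> real) \<Rightarrow> (complex^'n^'n) monoid" where
  "UGrp N = \<lparr>carrier = unitary_set N, monoid.mult = (**), one = mat 1\<rparr>"

text \<open>Operator norm: max of N (a v) over unit vectors (written as Sup; the max is attained).\<close>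
definition opnorm :: "(complex^'n \<Rightarrow> real) \<Rightarrow> complex^'n^'n \<Rightarrow> real" where
  "opnorm N a = Sup {N (a *v v) | v. N v = 1}"

end

theory Submission
  imports Defs
begin

context
  fixes N :: "complex^'n \<Rightarrow> real"
  assumes cn: "is_cnorm N"
begin

lemma N_zero_iff: "N v = 0 \<longleftrightarrow> v = 0"
  using cn unfolding is_cnorm_def by blast

lemma N_smult: "N (c *s v) = cmod c * N v"
  using cn unfolding is_cnorm_def by blast

lemma N_tri: "N (v + w) \<le> N v + N w"
  using cn unfolding is_cnorm_def by blast

lemma N0[simp]: "N 0 = 0"
  using N_zero_iff by blast

lemma N_minus: "N (-v) = N v"
proof -
  have "-v = (-1::complex) *s v" by (simp add: vec_eq_iff)
  then show ?thesis using N_smult[of "-1" v] by simp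
qed

lemma N_nonneg: "0 \<le> N v"
proof -
  have "N (v + -v) \<le> N v + N (-v)" by (rule N_tri)
  then show ?thesis by (simp add: N_minus)
qed

lemma N_scaleR: "N (r *\<^sub>R v) = \<bar>r\<bar> * N v"
proof -
  have "r *\<^sub>R v = complex_of_real r *s v"
  proof (subst vec_eq_iff, intro allI)
    fix i
    have "(r *\<^sub>R v)$i = r *\<^sub>R (v$i)" by simp
    also have "\<dots> = complex_of_real r * v$i" by (simp add: scaleR_conv_of_real)
    finally show "(r *\<^sub>R v)$i = (complex_of_real r *s v)$i" by simp
  qed
  then show ?thesis using N_smult[of "complex_of_real r" v] by simp
qed

lemma N_diff: "N (v - w) \<le> N v + N w"
  using N_tri[of v "-w"] by (simp add: N_minus)

lemma N_commute_diff: "N (v - w) = N (w - v)"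
  using N_minus[of "v - w"] by simp

lemma N_sum: "N (sum f S) \<le> (\<Sum>i\<in>S. N (f i))"
proof (cases "finite S")
  case True
  then show ?thesis
  proof (induction S rule: finite_induct)
    case empty then show ?case by simp
  next
    case (insert x F)
    then show ?case using N_tri[of "f x" "sum f F"] by simp
  qed
next
  case False then show ?thesis by simp
qed

lemma N_upper: "\<exists>K\<ge>0. \<forall>v. N v \<le> K * norm v"
proof (intro exI[of _ "\<Sum>i\<in>UNIV. N (axis i 1)"] conjI allI)
  show "0 \<le> (\<Sum>i\<in>UNIV. N (axis i 1))" by (simp add: sum_nonneg N_nonneg)
  fix v :: "complex^'n"
  have "N v = N (\<Sum>i\<in>UNIV. v$i *s axis i 1)" by (simp add: basis_expansion)
  also have "\<dots> \<le> (\<Sum>i\<in>UNIV. N (v$i *s axis i 1))" by (rule N_sum)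
  also have "\<dots> = (\<Sum>i\<in>UNIV. cmod (v$i) * N (axis i 1))" by (simp add: N_smult)
  also have "\<dots> \<le> (\<Sum>i\<in>UNIV. norm v * N (axis i 1))"
    by (intro sum_mono mult_right_mono) (auto simp: N_nonneg intro: Finite_Cartesian_Product.norm_nth_le)
  also have "\<dots> = (\<Sum>i\<in>UNIV. N (axis i 1)) * norm v" by (simp add: sum_distrib_left mult.commute)
  finally show "N v \<le> (\<Sum>i\<in>UNIV. N (axis i 1)) * norm v" .
qed

lemma N_lip: "\<bar>N v - N w\<bar> \<le> N (v - w)"
proof -
  have "N v \<le> N w + N (v - w)" using N_tri[of w "v - w"] by simp
  moreover have "N w \<le> N v + N (w - v)" using N_tri[of v "w - v"] by simp
  ultimately show ?thesis using N_commute_diff[of v w] by linarith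
qed

lemma N_cont: "continuous_on S N"
proof -
  obtain K where K: "K \<ge> 0" "\<forall>v. N v \<le> K * norm v" using N_upper by blast
  have "K-lipschitz_on S N"
    unfolding lipschitz_on_def
  proof (intro conjI ballI)
    fix x y assume "x \<in> S" "y \<in> S"
    have "dist (N x) (N y) = \<bar>N x - N y\<bar>" by (simp add: dist_real_def)
    also have "\<dots> \<le> N (x - y)" by (rule N_lip)
    also have "\<dots> \<le> K * dist x y" using K by (simp add: dist_norm)
    finally show "dist (N x) (N y) \<le> K * dist x y" .
  qed (use K in auto)
  then show ?thesis by (rule lipschitz_on_continuous_on)
qed

lemma N_pos: "v \<noteq> 0 \<Longrightarrow> 0 < N v"
  using N_nonneg[of v] N_zero_iff[of v] by linarith

lemma N_lower: "\<exists>m>0. \<forall>v. m * norm v \<le> N v"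
proof -
  let ?S = "sphere (0::complex^'n) 1"
  have "?S \<noteq> {}" by simp
  then obtain x0 where x0: "x0 \<in> ?S" "\<forall>y\<in>?S. N x0 \<le> N y"
    using continuous_attains_inf[OF compact_sphere _ N_cont] by blast
  have "x0 \<noteq> 0" using x0 by auto
  then have m: "N x0 > 0" by (rule N_pos)
  show ?thesis
  proof (intro exI[of _ "N x0"] conjI allI m)
    fix v :: "complex^'n"
    show "N x0 * norm v \<le> N v"
    proof (cases "v = 0")
      case True then show ?thesis by simp
    next
      case False
      let ?u = "(1 / norm v) *\<^sub>R v"
      have "?u \<in> ?S" using False by (simp add: norm_scaleR)
      then have "N x0 \<le> N ?u" using x0 by blast
      also have "\<dots> = N v / norm v" by (simp add: N_scaleR)
      finally show ?thesis using False by (simp add: field_simps)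
    qed
  qed
qed

lemma N_bound: "\<exists>C\<ge>0. \<forall>v. N (a *v v) \<le> C * N v"
proof -
  obtain K where K: "K \<ge> 0" "\<forall>v. N v \<le> K * norm v" using N_upper by blast
  obtain m where m: "m > 0" "\<forall>v. m * norm v \<le> N v" using N_lower by blast
  obtain B where B: "B \<ge> 0" "\<forall>x. norm (a *v x) \<le> norm x * B"
    using bounded_linear.nonneg_bounded[OF matrix_vector_mul_bounded_linear[of a]] by blast
  show ?thesis
  proof (intro exI[of _ "K * B / m"] conjI allI)
    show "0 \<le> K * B / m" using K B m by simp
    fix v
    have "N (a *v v) \<le> K * norm (a *v v)" using K by blast
    also have "\<dots> \<le> K * (norm v * B)" using K B by (simp add: mult_left_mono)
    also have "\<dots> = (K * B / m) * (m * norm v)" using m by simp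
    also have "\<dots> \<le> (K * B / m) * N v" using m K B by (intro mult_left_mono) auto
    finally show "N (a *v v) \<le> K * B / m * N v" .
  qed
qed

lemma ex_unit: "\<exists>v. N v = 1"
proof -
  have "sphere (0::complex^'n) 1 \<noteq> {}" by simp
  then obtain v0 :: "complex^'n" where "v0 \<in> sphere 0 1" by blast
  then have "norm v0 = 1" by simp
  then have "v0 \<noteq> 0" by auto
  then have p: "N v0 > 0" by (rule N_pos)
  have "N ((1 / N v0) *\<^sub>R v0) = 1" using p by (simp add: N_scaleR)
  then show ?thesis by blast
qed

lemma opn_bdd: "bdd_above {N (a *v v) | v. N v = 1}"
proof -
  obtain C where "\<forall>v. N (a *v v) \<le> C * N v" using N_bound by blast
  then show ?thesis unfolding bdd_above_def by (intro exI[of _ C]) (auto, metis mult.right_neutral)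
qed

lemma opn_upper: "N v = 1 \<Longrightarrow> N (a *v v) \<le> opnorm N a"
  unfolding opnorm_def by (rule cSup_upper[OF _ opn_bdd]) blast

lemma opn_nonneg: "0 \<le> opnorm N a"
proof -
  obtain v where "N v = 1" using ex_unit by blast
  then show ?thesis using opn_upper[of v a] N_nonneg[of "a *v v"] by linarith
qed

lemma opn_le: "N (a *v v) \<le> opnorm N a * N v"
proof (cases "v = 0")
  case True then show ?thesis by simp
next
  case False
  then have p: "N v > 0" by (rule N_pos)
  let ?u = "(1 / N v) *\<^sub>R v"
  have "N ?u = 1" using p by (simp add: N_scaleR)
  then have "N (a *v ?u) \<le> opnorm N a" by (rule opn_upper)
  moreover have "a *v ?u = (1 / N v) *\<^sub>R (a *v v)"
    by (rule linear_cmul[OF matrix_vector_mul_linear])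
  ultimately have "N (a *v v) / N v \<le> opnorm N a" using p by (simp add: N_scaleR)
  then show ?thesis using p by (simp add: field_simps)
qed

lemma opn_leI: "(\<And>v. N (a *v v) \<le> c * N v) \<Longrightarrow> opnorm N a \<le> c"
  unfolding opnorm_def
proof (rule cSup_least)
  show "{N (a *v v) |v. N v = 1} \<noteq> {}" using ex_unit by blast
qed (auto, metis mult.right_neutral)

end

fun mpow :: "complex^'n^'n \<Rightarrow> nat \<Rightarrow> complex^'n^'n" where
  "mpow g 0 = mat 1"
| "mpow g (Suc k) = g ** mpow g k"

lemma mpow_Suc2: "mpow g (Suc k) = mpow g k ** g"
  by (induction k) (simp_all add: matrix_mul_assoc)

lemma mpow_add: "mpow g (i + j) = mpow g i ** mpow g j"
  by (induction i) (simp_all add: matrix_mul_assoc)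

lemma mpow_comm: "a ** g = g ** a \<Longrightarrow> a ** mpow g k = mpow g k ** a"
proof (induction k)
  case 0 then show ?case by simp
next
  case (Suc k)
  have "a ** mpow g (Suc k) = (a ** g) ** mpow g k" by (simp add: matrix_mul_assoc)
  also have "\<dots> = g ** (a ** mpow g k)" using Suc.prems by (metis matrix_mul_assoc)
  also have "\<dots> = mpow g (Suc k) ** a" using Suc.IH[OF Suc.prems] by (metis matrix_mul_assoc mpow.simps(2))
  finally show ?case .
qed

lemma mat1_diff_mv: "(mat 1 - x) *v v = v - x *v (v::complex^'n)"
  by (simp add: matrix_vector_mult_diff_rdistrib)

context
  fixes N :: "complex^'n \<Rightarrow> real"
  assumes cn: "is_cnorm N"
begin

lemma uni_iso: "x \<in> unitary_set N \<Longrightarrow> N (x *v v) = N v"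
  unfolding unitary_set_def by blast

lemma uni_mult: "x \<in> unitary_set N \<Longrightarrow> y \<in> unitary_set N \<Longrightarrow> x ** y \<in> unitary_set N"
  unfolding unitary_set_def
  by (auto simp: invertible_mult matrix_vector_mul_assoc[symmetric])

lemma uni_one: "mat 1 \<in> unitary_set N"
  unfolding unitary_set_def invertible_def by (auto intro: exI[of _ "mat 1"])

lemma group_U: "group (UGrp N)"
proof (rule groupI)
  fix x assume x: "x \<in> carrier (UGrp N)"
  then have xu: "x \<in> unitary_set N" by (simp add: UGrp_def)
  then obtain x' where x': "x ** x' = mat 1" "x' ** x = mat 1"
    unfolding unitary_set_def invertible_def by blast
  have "invertible x'" unfolding invertible_def using x' by blast
  moreover have "N (x' *v v) = N v" for v
  proof -
    have "N (x' *v v) = N (x *v (x' *v v))" using uni_iso[OF xu] by simp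
    also have "\<dots> = N v" by (simp add: matrix_vector_mul_assoc x')
    finally show ?thesis .
  qed
  ultimately have "x' \<in> unitary_set N" unfolding unitary_set_def by blast
  then show "\<exists>y\<in>carrier (UGrp N). y \<otimes>\<^bsub>UGrp N\<^esub> x = \<one>\<^bsub>UGrp N\<^esub>"
    using x' by (auto simp: UGrp_def)
qed (auto simp: UGrp_def uni_mult uni_one matrix_mul_assoc)

lemma d_zero: "opnorm N (mat 1 - x) = 0 \<Longrightarrow> x = mat 1"
proof -
  assume h: "opnorm N (mat 1 - x) = 0"
  have "x *v v = mat 1 *v v" for v
  proof -
    have "N (v - x *v v) \<le> 0" using opn_le[OF cn, of "mat 1 - x" v] h by (simp add: mat1_diff_mv)
    then have "N (v - x *v v) = 0" using N_nonneg[OF cn, of "v - x *v v"] by linarith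
    then show ?thesis using N_zero_iff[OF cn] by simp
  qed
  then show ?thesis by (simp add: matrix_eq)
qed

lemma conj_le:
  assumes g: "g \<in> unitary_set N" and gi: "g ** gi = mat 1"
  shows "opnorm N (mat 1 - g ** h ** gi) \<le> opnorm N (mat 1 - h)"
proof (rule opn_leI[OF cn])
  fix v
  let ?u = "gi *v v"
  have gu: "g *v (gi *v v) = v" by (simp add: matrix_vector_mul_assoc gi)
  have Nu: "N ?u = N v" using uni_iso[OF g, of ?u] gu by simp
  have "(mat 1 - g ** h ** gi) *v v = g *v ((mat 1 - h) *v ?u)"
    by (simp add: mat1_diff_mv matrix_vector_mult_diff_distrib matrix_vector_mul_assoc[symmetric] gu)
  then have "N ((mat 1 - g ** h ** gi) *v v) = N ((mat 1 - h) *v ?u)" using uni_iso[OF g] by simp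
  also have "\<dots> \<le> opnorm N (mat 1 - h) * N ?u" by (rule opn_le[OF cn])
  finally show "N ((mat 1 - g ** h ** gi) *v v) \<le> opnorm N (mat 1 - h) * N v" using Nu by simp
qed

lemma comm_est:
  assumes x: "x \<in> unitary_set N" and y: "y \<in> unitary_set N"
    and xi: "xi \<in> unitary_set N" and yi: "yi \<in> unitary_set N"
    and xx: "x ** xi = mat 1" and yy: "y ** yi = mat 1"
  shows "opnorm N (mat 1 - x ** y ** xi ** yi) \<le> 2 * opnorm N (mat 1 - x) * opnorm N (mat 1 - y)"
proof (rule opn_leI[OF cn])
  fix v
  let ?u = "xi *v (yi *v v)"
  let ?a = "opnorm N (mat 1 - x)" and ?b = "opnorm N (mat 1 - y)"
  have Nu: "N ?u = N v" using uni_iso[OF xi] uni_iso[OF yi] by simp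
  have xxv: "x *v (xi *v w) = w" for w by (simp add: matrix_vector_mul_assoc xx)
  have yyv: "y *v (yi *v w) = w" for w by (simp add: matrix_vector_mul_assoc yy)
  have yxu: "y *v (x *v ?u) = v" by (simp add: xxv yyv)
  have "(mat 1 - x ** y ** xi ** yi) *v v = v - x *v (y *v ?u)"
    by (simp add: mat1_diff_mv matrix_vector_mul_assoc[symmetric])
  also have "\<dots> = y *v (x *v ?u) - x *v (y *v ?u)" using yxu by simp
  also have "\<dots> = (mat 1 - y) *v ((mat 1 - x) *v ?u) - (mat 1 - x) *v ((mat 1 - y) *v ?u)"
    by (simp add: mat1_diff_mv matrix_vector_mult_diff_distrib algebra_simps)
  finally have eq: "(mat 1 - x ** y ** xi ** yi) *v v =
     (mat 1 - y) *v ((mat 1 - x) *v ?u) - (mat 1 - x) *v ((mat 1 - y) *v ?u)" .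
  have "N ((mat 1 - y) *v ((mat 1 - x) *v ?u)) \<le> ?b * N ((mat 1 - x) *v ?u)" by (rule opn_le[OF cn])
  also have "\<dots> \<le> ?b * (?a * N ?u)" by (intro mult_left_mono opn_le[OF cn] opn_nonneg[OF cn])
  finally have 1: "N ((mat 1 - y) *v ((mat 1 - x) *v ?u)) \<le> ?a * ?b * N v" using Nu by (simp add: mult_ac)
  have "N ((mat 1 - x) *v ((mat 1 - y) *v ?u)) \<le> ?a * N ((mat 1 - y) *v ?u)" by (rule opn_le[OF cn])
  also have "\<dots> \<le> ?a * (?b * N ?u)" by (intro mult_left_mono opn_le[OF cn] opn_nonneg[OF cn])
  finally have 2: "N ((mat 1 - x) *v ((mat 1 - y) *v ?u)) \<le> ?a * ?b * N v" using Nu by (simp add: mult_ac)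
  show "N ((mat 1 - x ** y ** xi ** yi) *v v) \<le> 2 * ?a * ?b * N v"
    unfolding eq using N_diff[OF cn, of "(mat 1 - y) *v ((mat 1 - x) *v ?u)" "(mat 1 - x) *v ((mat 1 - y) *v ?u)"] 1 2
    by linarith
qed

end

lemma gen_comm:
  assumes G: "group H" and S: "S \<subseteq> carrier H" and c: "c \<in> carrier H"
    and sc: "\<forall>s\<in>S. s \<otimes>\<^bsub>H\<^esub> c = c \<otimes>\<^bsub>H\<^esub> s"
    and a: "a \<in> generate H S"
  shows "a \<otimes>\<^bsub>H\<^esub> c = c \<otimes>\<^bsub>H\<^esub> a"
  using a
proof (induction rule: generate.induct)
  case one then show ?case using c group.is_monoid[OF G] by (simp add: monoid.l_one monoid.r_one)
next
  case (incl h) then show ?case using sc by blast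
next
  case (inv h)
  interpret group H by (rule G)
  have h: "h \<in> carrier H" using inv S by blast
  have hc: "h \<otimes>\<^bsub>H\<^esub> c = c \<otimes>\<^bsub>H\<^esub> h" using sc inv by blast
  have e1: "inv\<^bsub>H\<^esub> h \<otimes>\<^bsub>H\<^esub> c = inv\<^bsub>H\<^esub> h \<otimes>\<^bsub>H\<^esub> (c \<otimes>\<^bsub>H\<^esub> h) \<otimes>\<^bsub>H\<^esub> inv\<^bsub>H\<^esub> h"
    using h c by (simp add: m_assoc)
  have e2: "inv\<^bsub>H\<^esub> h \<otimes>\<^bsub>H\<^esub> (h \<otimes>\<^bsub>H\<^esub> c) = c"
    using h c by (simp add: m_assoc[symmetric])
  show ?case using e1 e2 hc by simp
next
  case (eng h1 h2)
  interpret group H by (rule G)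
  have h1: "h1 \<in> carrier H" and h2: "h2 \<in> carrier H"
    using eng generate_in_carrier[OF S] by auto
  have "h1 \<otimes>\<^bsub>H\<^esub> h2 \<otimes>\<^bsub>H\<^esub> c = h1 \<otimes>\<^bsub>H\<^esub> (c \<otimes>\<^bsub>H\<^esub> h2)"
    using h1 h2 c eng by (simp add: m_assoc)
  also have "\<dots> = c \<otimes>\<^bsub>H\<^esub> (h1 \<otimes>\<^bsub>H\<^esub> h2)"
    using h1 h2 c eng by (simp add: m_assoc[symmetric])
  finally show ?case .
qed

context
  fixes N :: "complex^'n \<Rightarrow> real"
  assumes cn: "is_cnorm N"
begin

lemma key_comm:
  assumes sg: "subgroup G (UGrp N)" and fin: "finite G"
  shows "\<forall>x\<in>G. \<forall>y\<in>G. opnorm N (mat 1 - x) < 1/2 \<longrightarrow> opnorm N (mat 1 - y) < 1/2 \<longrightarrow> x ** y = y ** x"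
proof (rule ccontr)
  define d where "d x = opnorm N (mat 1 - x)" for x
  define H where "H = (UGrp N)\<lparr>carrier := G\<rparr>"
  define ix where "ix x = inv\<^bsub>H\<^esub> x" for x
  have grpH: "group H" unfolding H_def by (rule subgroup.subgroup_is_group[OF sg group_U[OF cn]])
  have carH: "carrier H = G" by (simp add: H_def)
  have multH: "x \<otimes>\<^bsub>H\<^esub> y = x ** y" for x y by (simp add: H_def UGrp_def)
  have oneH: "\<one>\<^bsub>H\<^esub> = mat 1" by (simp add: H_def UGrp_def)
  have GU: "G \<subseteq> unitary_set N" using subgroup.subset[OF sg] by (simp add: UGrp_def)
  have ix_in: "x \<in> G \<Longrightarrow> ix x \<in> G" for x
    using group.inv_closed[OF grpH] carH ix_def by auto
  have ix_r: "x \<in> G \<Longrightarrow> x ** ix x = mat 1" for x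
    using group.r_inv[OF grpH, of x] carH ix_def multH oneH by auto
  have ix_l: "x \<in> G \<Longrightarrow> ix x ** x = mat 1" for x
    using group.l_inv[OF grpH, of x] carH ix_def multH oneH by auto
  have mG: "x \<in> G \<Longrightarrow> y \<in> G \<Longrightarrow> x ** y \<in> G" for x y
    using subgroup.m_closed[OF sg] by (simp add: UGrp_def)
  have oneG: "mat 1 \<in> G"
    using subgroup.one_closed[OF sg] by (simp add: UGrp_def)
  have ix_canc: "x \<in> G \<Longrightarrow> ix x ** (x ** z) = z" for x z
    by (simp add: matrix_mul_assoc ix_l)
  have dnn: "0 \<le> d x" for x unfolding d_def by (rule opn_nonneg[OF cn])
  define M where "M = {x \<in> G. d x < 1/2}"
  define S where "S = {p \<in> M \<times> M. fst p ** snd p \<noteq> snd p ** fst p}"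
  define f where "f p = d (fst p) + d (snd p)" for p
  assume "\<not> ?thesis"
  then have "S \<noteq> {}" unfolding S_def M_def d_def by auto
  moreover have "finite S" unfolding S_def M_def using fin by auto
  ultimately have p0: "arg_min_on f S \<in> S" and p0min: "\<not>(\<exists>q\<in>S. f q < f (arg_min_on f S))"
    using arg_min_if_finite by blast+
  obtain x y where xy: "arg_min_on f S = (x, y)" by (cases "arg_min_on f S") auto
  have xM: "x \<in> M" and yM: "y \<in> M" and nc: "x ** y \<noteq> y ** x" using p0 xy S_def by auto
  have xG: "x \<in> G" and yG: "y \<in> G" using xM yM M_def by auto
  have min: "\<And>q. q \<in> S \<Longrightarrow> d x + d y \<le> f q" using p0min xy f_def by force
  let ?a = "d x" and ?b = "d y"
  have a2: "?a < 1/2" and b2: "?b < 1/2" using xM yM M_def by auto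
  have apos: "?a > 0"
  proof -
    have "?a \<noteq> 0" using nc d_zero[OF cn, of x] d_def by auto
    then show ?thesis using dnn[of x] by linarith
  qed
  have bpos: "?b > 0"
  proof -
    have "?b \<noteq> 0" using nc d_zero[OF cn, of y] d_def by auto
    then show ?thesis using dnn[of y] by linarith
  qed
  define w where "w = y ** x ** ix y ** ix x"
  have wG: "w \<in> G" unfolding w_def using xG yG by (intro mG ix_in) auto
  have dw: "d w \<le> 2 * ?b * ?a"
    unfolding w_def d_def
    by (rule comm_est[OF cn]) (use GU xG yG ix_in ix_r in auto)
  have "2 * ?b * ?a < ?a" using apos b2 by (simp add: mult_less_cancel_right)
  then have dwa: "d w < ?a" using dw by linarith
  have "2 * ?b * ?a < ?b" using bpos a2 by (simp add: mult_less_cancel_left)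
  then have dwb: "d w < ?b" using dw by linarith
  have wM: "w \<in> M" using wG dwa a2 M_def by auto
  have wxy: "w ** (x ** y) = y ** x"
    unfolding w_def by (simp add: matrix_mul_assoc[symmetric] ix_canc xG yG ix_l)
  have wne: "w \<noteq> mat 1" using wxy nc by auto
  have wx: "w ** x = x ** w"
  proof (rule ccontr)
    assume "w ** x \<noteq> x ** w"
    then have "(w, x) \<in> S" using wM xM S_def by auto
    then have "d x + d y \<le> d w + d x" using min f_def by force
    then show False using dwb by linarith
  qed
  have wy: "w ** y = y ** w"
  proof (rule ccontr)
    assume "w ** y \<noteq> y ** w"
    then have "(w, y) \<in> S" using wM yM S_def by auto
    then have "d x + d y \<le> d w + d y" using min f_def by force
    then show False using dwa by linarith
  qed
  have yxiy: "y ** x ** ix y = w ** x"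
    unfolding w_def by (simp add: matrix_mul_assoc[symmetric] ix_canc xG yG ix_l)
  have powG: "g \<in> G \<Longrightarrow> mpow g k \<in> G" for g k
    by (induction k) (auto intro: mG oneG)
  have powinv: "mpow y k ** mpow (ix y) k = mat 1" for k
  proof (induction k)
    case 0 then show ?case by simp
  next
    case (Suc k)
    have "mpow y (Suc k) ** mpow (ix y) (Suc k) = y ** (mpow y k ** mpow (ix y) k) ** ix y"
      unfolding mpow_Suc2[of "ix y" k] mpow.simps(2)[of y k] by (simp add: matrix_mul_assoc)
    then show ?case using Suc ix_r[OF yG] by simp
  qed
  have conj: "mpow y k ** x ** mpow (ix y) k = mpow w k ** x" for k
  proof (induction k)
    case 0 then show ?case by simp
  next
    case (Suc k)
    have "mpow y (Suc k) ** x ** mpow (ix y) (Suc k) = y ** (mpow y k ** x ** mpow (ix y) k) ** ix y"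
      unfolding mpow_Suc2[of "ix y" k] mpow.simps(2)[of y k] by (simp add: matrix_mul_assoc)
    also have "\<dots> = (y ** mpow w k) ** x ** ix y" using Suc by (simp add: matrix_mul_assoc)
    also have "\<dots> = mpow w k ** (y ** x ** ix y)"
      using mpow_comm[OF wy[symmetric], of k] by (simp add: matrix_mul_assoc)
    also have "\<dots> = mpow w (Suc k) ** x" using yxiy mpow_Suc2[of w k] by (simp add: matrix_mul_assoc)
    finally show ?case .
  qed
  have dconj: "d (mpow w k ** x) \<le> ?a" for k
  proof -
    have "d (mpow y k ** x ** mpow (ix y) k) \<le> ?a"
      unfolding d_def by (rule conj_le[OF cn]) (use powG yG GU powinv in auto)
    then show ?thesis using conj by simp
  qed
  have est: "N (v - mpow w k *v v) \<le> 2 * ?a * N v" for k v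
  proof -
    let ?W = "mpow w k"
    have WU: "?W \<in> unitary_set N" using powG[OF wG] GU by auto
    have eq: "v - ?W *v v = (mat 1 - ?W ** x) *v v - ?W *v ((mat 1 - x) *v v)"
      by (simp add: mat1_diff_mv matrix_vector_mult_diff_distrib matrix_vector_mul_assoc[symmetric])
    have "N (v - ?W *v v) \<le> N ((mat 1 - ?W ** x) *v v) + N (?W *v ((mat 1 - x) *v v))"
      unfolding eq by (rule N_diff[OF cn])
    also have "\<dots> = N ((mat 1 - ?W ** x) *v v) + N ((mat 1 - x) *v v)" using uni_iso[OF cn WU] by simp
    also have "\<dots> \<le> d (?W ** x) * N v + ?a * N v"
      unfolding d_def by (intro add_mono opn_le[OF cn])
    also have "\<dots> \<le> ?a * N v + ?a * N v"
      using dconj[of k] N_nonneg[OF cn, of v] by (intro add_mono mult_right_mono) auto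
    finally show ?thesis by (simp add: mult_ac)
  qed
  define C where "C = range (mpow w)"
  have CG: "C \<subseteq> G" using powG[OF wG] C_def by auto
  have finC: "finite C" using CG fin finite_subset by auto
  have Cne: "C \<noteq> {}" using C_def by auto
  have "mpow w 1 = w" by simp
  then have wC: "w \<in> C" unfolding C_def using rangeI[of "mpow w" 1] by simp
  have himg: "h \<in> C \<Longrightarrow> (\<lambda>g. h ** g) ` C = C" for h
  proof -
    assume hC: "h \<in> C"
    then obtain i where i: "h = mpow w i" using C_def by auto
    have hG: "h \<in> G" using hC CG by auto
    show ?thesis
    proof (rule endo_inj_surj[OF finC])
      show "(\<lambda>g. h ** g) ` C \<subseteq> C" using i C_def by (auto simp: mpow_add[symmetric])
      show "inj_on (\<lambda>g. h ** g) C"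
      proof (rule inj_onI)
        fix p q assume "h ** p = h ** q"
        then have "ix h ** (h ** p) = ix h ** (h ** q)" by simp
        then show "p = q" by (simp only: ix_canc[OF hG])
      qed
    qed
  qed
  define T where "T u = (\<Sum>g\<in>C. g *v u)" for u
  have hT: "h \<in> C \<Longrightarrow> h *v T u = T u" for h u
  proof -
    assume hC: "h \<in> C"
    have hG: "h \<in> G" using hC CG by auto
    have inj: "inj_on (\<lambda>g. h ** g) C"
    proof (rule inj_onI)
      fix p q assume "h ** p = h ** q"
      then have "ix h ** (h ** p) = ix h ** (h ** q)" by simp
      then show "p = q" by (simp only: ix_canc[OF hG])
    qed
    have "h *v T u = (\<Sum>g\<in>C. h *v (g *v u))"
      unfolding T_def by (rule real_vector.linear_sum[OF matrix_vector_mul_linear])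
    also have "\<dots> = (\<Sum>g\<in>C. (h ** g) *v u)" by (simp add: matrix_vector_mul_assoc)
    also have "\<dots> = (\<Sum>g\<in>(\<lambda>g. h ** g) ` C. g *v u)" by (simp add: sum.reindex[OF inj])
    also have "\<dots> = T u" using himg[OF hC] T_def by simp
    finally show ?thesis .
  qed
  obtain u0 where u0: "w *v u0 \<noteq> u0"
  proof -
    have "\<not> (\<forall>u. w *v u = mat 1 *v u)" using wne by (simp only: matrix_eq[symmetric] not_False_eq_True)
    then have "\<exists>u. w *v u \<noteq> mat 1 *v u" by (simp only: not_all)
    then obtain u where u: "w *v u \<noteq> mat 1 *v u" ..
    have "w *v u \<noteq> u" using u by (simp only: matrix_vector_mul_lid not_False_eq_True)
    then show ?thesis by (rule that)
  qed
  define n where "n = real (card C)"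
  have "card C > 0" using finC Cne by (simp add: card_gt_0_iff)
  then have npos: "n > 0" unfolding n_def by simp
  define v where "v = n *\<^sub>R u0 - T u0"
  have lin: "linear ((*v) g)" for g :: "complex^'n^'n" by (rule matrix_vector_mul_linear)
  have vne: "v \<noteq> 0"
  proof
    assume "v = 0"
    then have Tu: "T u0 = n *\<^sub>R u0" using v_def by simp
    have "n *\<^sub>R (w *v u0) = w *v (n *\<^sub>R u0)" by (rule linear_cmul[OF lin, symmetric])
    also have "\<dots> = n *\<^sub>R u0" using hT[OF wC, of u0] Tu by simp
    finally show False using npos u0 by simp
  qed
  have gv: "g *v v = n *\<^sub>R (g *v u0) - T u0" if "g \<in> C" for g
  proof -
    have "g *v v = g *v (n *\<^sub>R u0) - g *v T u0"
      unfolding v_def by (rule matrix_vector_mult_diff_distrib)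
    also have "g *v (n *\<^sub>R u0) = n *\<^sub>R (g *v u0)" by (rule linear_cmul[OF lin])
    also have "g *v T u0 = T u0" by (rule hT[OF that])
    finally show ?thesis .
  qed
  have sumgv: "(\<Sum>g\<in>C. g *v v) = 0"
  proof -
    have "(\<Sum>g\<in>C. g *v v) = (\<Sum>g\<in>C. n *\<^sub>R (g *v u0) - T u0)" using gv by (rule sum.cong[OF refl])
    also have "\<dots> = (\<Sum>g\<in>C. n *\<^sub>R (g *v u0)) - (\<Sum>g\<in>C. T u0)" by (rule sum_subtractf)
    also have "(\<Sum>g\<in>C. n *\<^sub>R (g *v u0)) = n *\<^sub>R T u0"
      unfolding T_def by (rule scaleR_sum_right[symmetric])
    also have "(\<Sum>g\<in>C. T u0) = n *\<^sub>R T u0" unfolding n_def by (rule sum_constant_scaleR)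
    finally show ?thesis by simp
  qed
  have "(\<Sum>g\<in>C. v - g *v v) = (\<Sum>g\<in>C. v) - (\<Sum>g\<in>C. g *v v)" by (rule sum_subtractf)
  also have "(\<Sum>g\<in>C. v) = n *\<^sub>R v" unfolding n_def by (rule sum_constant_scaleR)
  finally have sv: "(\<Sum>g\<in>C. v - g *v v) = n *\<^sub>R v" using sumgv by simp
  have "n * N v = N (n *\<^sub>R v)" using npos by (simp add: N_scaleR[OF cn])
  also have "\<dots> = N (\<Sum>g\<in>C. v - g *v v)" using sv by simp
  also have "\<dots> \<le> (\<Sum>g\<in>C. N (v - g *v v))" by (rule N_sum[OF cn])
  also have "\<dots> \<le> (\<Sum>g\<in>C. 2 * ?a * N v)"
  proof (rule sum_mono)
    fix g assume "g \<in> C"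
    then obtain k where "g = mpow w k" using C_def by auto
    then show "N (v - g *v v) \<le> 2 * ?a * N v" using est by simp
  qed
  also have "\<dots> = n * (2 * ?a * N v)" by (simp add: n_def)
  finally have ineq: "n * N v \<le> n * (2 * ?a * N v)" .
  have Nvp: "N v > 0" using vne by (rule N_pos[OF cn])
  have "N v * 1 \<le> N v * (2 * ?a)" using ineq npos by (simp add: mult_ac)
  then have "1 \<le> 2 * ?a" using Nvp by (simp add: mult_le_cancel_left_pos)
  then show False using a2 by linarith
qed

end

theorem mainTheorem6:
  fixes N :: "complex^'n \<Rightarrow> real" and G :: "(complex^'n^'n) set"
    and M A :: "(complex^'n^'n) set"
  assumes "is_cnorm N"
    and "subgroup G (UGrp N)"
    and "finite G"
    and "M = {x \<in> G. opnorm N (mat 1 - x) < 1/2}"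
    and "A = generate ((UGrp N)\<lparr>carrier := G\<rparr>) M"
  shows "normal A ((UGrp N)\<lparr>carrier := G\<rparr>) \<and> (\<forall>a\<in>A. \<forall>b\<in>A. a ** b = b ** a)"
proof -
  define H where "H = (UGrp N)\<lparr>carrier := G\<rparr>"
  have grpH: "group H" unfolding H_def by (rule subgroup.subgroup_is_group[OF assms(2) group_U[OF assms(1)]])
  have carH: "carrier H = G" by (simp add: H_def)
  have multH: "x \<otimes>\<^bsub>H\<^esub> y = x ** y" for x y by (simp add: H_def UGrp_def)
  have oneH: "\<one>\<^bsub>H\<^esub> = mat 1" by (simp add: H_def UGrp_def)
  have GU: "G \<subseteq> unitary_set N" using subgroup.subset[OF assms(2)] by (simp add: UGrp_def)
  have MG: "M \<subseteq> carrier H" using assms(4) carH by auto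
  have A: "A = generate H M" using assms(5) H_def by simp
  have normal: "generate H M \<lhd> H"
  proof (rule group.normal_generateI[OF grpH MG])
    fix h g assume h: "h \<in> M" and g: "g \<in> carrier H"
    have hH: "h \<in> carrier H" using h MG by auto
    have in1: "g \<otimes>\<^bsub>H\<^esub> h \<otimes>\<^bsub>H\<^esub> inv\<^bsub>H\<^esub> g \<in> carrier H"
      using g hH group.inv_closed[OF grpH] monoid.m_closed[OF group.is_monoid[OF grpH]] by blast
    have gi: "g ** inv\<^bsub>H\<^esub> g = mat 1" using group.r_inv[OF grpH g] multH oneH by simp
    have gU: "g \<in> unitary_set N" using g carH GU by auto
    have "opnorm N (mat 1 - g ** h ** inv\<^bsub>H\<^esub> g) \<le> opnorm N (mat 1 - h)"
      by (rule conj_le[OF assms(1) gU gi])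
    moreover have "opnorm N (mat 1 - h) < 1/2" using h assms(4) by auto
    ultimately show "g \<otimes>\<^bsub>H\<^esub> h \<otimes>\<^bsub>H\<^esub> inv\<^bsub>H\<^esub> g \<in> M"
      using in1 assms(4) multH carH by auto
  qed
  have key: "\<forall>x\<in>G. \<forall>y\<in>G. opnorm N (mat 1 - x) < 1/2 \<longrightarrow> opnorm N (mat 1 - y) < 1/2 \<longrightarrow> x ** y = y ** x"
    by (rule key_comm[OF assms(1) assms(2) assms(3)])
  have commM: "\<forall>x\<in>M. \<forall>y\<in>M. x \<otimes>\<^bsub>H\<^esub> y = y \<otimes>\<^bsub>H\<^esub> x"
    using key assms(4) multH by auto
  have step1: "a \<otimes>\<^bsub>H\<^esub> m = m \<otimes>\<^bsub>H\<^esub> a" if a: "a \<in> generate H M" and m: "m \<in> M" for a m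
  proof (rule gen_comm[OF grpH MG _ _ a])
    show "m \<in> carrier H" using m MG by auto
    show "\<forall>s\<in>M. s \<otimes>\<^bsub>H\<^esub> m = m \<otimes>\<^bsub>H\<^esub> s" using commM m by blast
  qed
  have comm: "a ** b = b ** a" if a: "a \<in> generate H M" and b: "b \<in> generate H M" for a b
  proof -
    have "b \<otimes>\<^bsub>H\<^esub> a = a \<otimes>\<^bsub>H\<^esub> b"
    proof (rule gen_comm[OF grpH MG _ _ b])
      show "a \<in> carrier H" using group.generate_in_carrier[OF grpH MG a] .
      show "\<forall>s\<in>M. s \<otimes>\<^bsub>H\<^esub> a = a \<otimes>\<^bsub>H\<^esub> s" using step1[OF a] by auto
    qed
    then show ?thesis using multH by simp
  qed
  show ?thesis using normal comm A H_def by auto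
qed

end
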